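(* With the notation of the context, every $\alpha$-communal $k$-tuple $\mathbf{g}$ can be written in exactly one way as \[ \mathbf{g}=\mathbf{b}(\mathbf{a})+\sum_{i=1}^k c_i\mathbf{x}_i \] with $\mathbf{a}\in\mathcal{A}$ and $c_1,\dots,c_k\in\mathbb{Z}_{\ge 0}$; moreover, for every $\mathbf{a}\in\mathcal{A}$ and all $c_i\in\mathbb{Z}_{\ge0}$ the right-hand side is an $\alpha$-communal $k$-tuple. Explicitly, if $\mathbf{g}=[g_1,\dots,g_k]$ with $g=\sum g_i$, then $a_j$ is the least nonnegative residue of $m_jg-n_jg_j$ modulo $A$ and $c_j=(m_jg-n_jg_j-a_j)/A$. Furthermore, the sum of the entries of $\mathbf{b}(\mathbf{a})$ equals $b(\mathbf{a})=\frac{N}{A}\sum_{i=1}^k\frac{a_i}{n_i}$.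
   Context: Let $k\ge 2$ and let $\alpha_1,\dots,\alpha_k$ be nonnegative rational numbers such that the sum of any $k-1$ of them is at most $1$ and $\sum_i\alpha_i>1$. A $k$-tuple $[g_1,\dots,g_k]$ of integers is called $\alpha$-communal if $0\le g_i\le \alpha_i\sum_{j=1}^k g_j$ for every $i$. Write $\alpha_i=m_i/n_i$ in lowest terms with $n_i\ge 1$. Set $N=\prod_{i=1}^k n_i$, $A=N(\sum_{i=1}^k\alpha_i-1)$ (a positive integer), and $\hat\alpha_i=1-\sum_{j\ne i}\alpha_j$. For each $i$ define $\mathbf{x}_i=\frac{N}{n_i}[\alpha_1,\dots,\alpha_{i-1},\hat\alpha_i,\alpha_{i+1},\dots,\alpha_k]$, i.e. the $k$-tuple whose $j$-th entry is $\frac{N}{n_i}\alpha_j$ for $j\ne i$ and whose $i$-th entry is $\frac{N}{n_i}\hat\alpha_i$. Let $\mathcal{A}$ be the set of integer $k$-tuples $\mathbf{a}=(a_1,\dots,a_k)$ with $0\le a_i<A$ for all $i$ such that for every $1\le j\le k$ the integer $N\hat\alpha_j\frac{a_j}{n_j}+N\alpha_j\sum_{i\ne j}\frac{a_i}{n_i}$ is divisible by $A$. For $\mathbf{a}\in\mathcal{A}$ let $\mathbf{b}(\mathbf{a})=[b_1,\dots,b_k]=\sum_{i=1}^k\frac{a_i}{A}\mathbf{x}_i$, i.e. $b_j=\frac1A\left(N\hat\alpha_j\frac{a_j}{n_j}+N\alpha_j\sum_{i\ne j}\frac{a_i}{n_i}\right)$. *)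

theory Defs
  imports Complex_Main
begin

text \<open>Tuples are indexed by 0..k-1 and represented as functions on nat; only
  the entries with index < k matter.\<close>

definition mnum :: "(nat \<Rightarrow> rat) \<Rightarrow> nat \<Rightarrow> int" where
  "mnum \<alpha> i = fst (quotient_of (\<alpha> i))"

definition nden :: "(nat \<Rightarrow> rat) \<Rightarrow> nat \<Rightarrow> int" where
  "nden \<alpha> i = snd (quotient_of (\<alpha> i))"

definition Nprod :: "nat \<Rightarrow> (nat \<Rightarrow> rat) \<Rightarrow> int" where
  "Nprod k \<alpha> = (\<Prod>i<k. nden \<alpha> i)"

text \<open>A = N (sum alpha - 1); under the hypotheses this rational is a positive integer,
  so taking the floor loses nothing.\<close>
definition Aint :: "nat \<Rightarrow> (nat \<Rightarrow> rat) \<Rightarrow> int" where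
  "Aint k \<alpha> = \<lfloor>of_int (Nprod k \<alpha>) * ((\<Sum>i<k. \<alpha> i) - 1)\<rfloor>"

definition alpha_hat :: "nat \<Rightarrow> (nat \<Rightarrow> rat) \<Rightarrow> nat \<Rightarrow> rat" where
  "alpha_hat k \<alpha> i = 1 - (\<Sum>j\<in>{..<k} - {i}. \<alpha> j)"

definition communal :: "nat \<Rightarrow> (nat \<Rightarrow> rat) \<Rightarrow> (nat \<Rightarrow> int) \<Rightarrow> bool" where
  "communal k \<alpha> g \<longleftrightarrow>
     (\<forall>i<k. 0 \<le> g i \<and> of_int (g i) \<le> \<alpha> i * of_int (\<Sum>j<k. g j))"

definition xvec :: "nat \<Rightarrow> (nat \<Rightarrow> rat) \<Rightarrow> nat \<Rightarrow> nat \<Rightarrow> rat" where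
  "xvec k \<alpha> i j = of_int (Nprod k \<alpha>) / of_int (nden \<alpha> i) *
      (if j = i then alpha_hat k \<alpha> i else \<alpha> j)"

definition bnum :: "nat \<Rightarrow> (nat \<Rightarrow> rat) \<Rightarrow> (nat \<Rightarrow> int) \<Rightarrow> nat \<Rightarrow> rat" where
  "bnum k \<alpha> a j = of_int (Nprod k \<alpha>) * alpha_hat k \<alpha> j * of_int (a j) / of_int (nden \<alpha> j)
     + of_int (Nprod k \<alpha>) * \<alpha> j * (\<Sum>i\<in>{..<k} - {j}. of_int (a i) / of_int (nden \<alpha> i))"

definition inA :: "nat \<Rightarrow> (nat \<Rightarrow> rat) \<Rightarrow> (nat \<Rightarrow> int) \<Rightarrow> bool" where
  "inA k \<alpha> a \<longleftrightarrow> (\<forall>i<k. 0 \<le> a i \<and> a i < Aint k \<alpha>) \<and>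
     (\<forall>j<k. \<exists>z::int. bnum k \<alpha> a j = of_int (Aint k \<alpha>) * of_int z)"

definition bvec :: "nat \<Rightarrow> (nat \<Rightarrow> rat) \<Rightarrow> (nat \<Rightarrow> int) \<Rightarrow> nat \<Rightarrow> rat" where
  "bvec k \<alpha> a j = bnum k \<alpha> a j / of_int (Aint k \<alpha>)"

definition repr :: "nat \<Rightarrow> (nat \<Rightarrow> rat) \<Rightarrow> (nat \<Rightarrow> int) \<Rightarrow> (nat \<Rightarrow> int) \<Rightarrow> nat \<Rightarrow> rat" where
  "repr k \<alpha> a c j = bvec k \<alpha> a j + (\<Sum>i<k. of_int (c i) * xvec k \<alpha> i j)"

end

theory Submission
  imports Defs
begin

lemma nden_pos: "nden \<alpha> i > 0"
  unfolding nden_def by (rule quotient_of_denom_pos')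

lemma alpha_eq: "\<alpha> i = of_int (mnum \<alpha> i) / of_int (nden \<alpha> i)"
  unfolding mnum_def nden_def by (metis prod.collapse quotient_of_div)

lemma Nprod_pos: "Nprod k \<alpha> > 0"
  unfolding Nprod_def by (rule prod_pos) (simp add: nden_pos)

lemma sum_rem: "i < (k::nat) \<Longrightarrow> (\<Sum>j\<in>{..<k} - {i}. f j) = (\<Sum>j<k. f j) - (f i :: rat)"
proof -
  assume "i < k"
  have "(\<Sum>j<k. f j) = f i + (\<Sum>j\<in>{..<k} - {i}. f j)" by (rule sum.remove) (use \<open>i<k\<close> in auto)
  then show ?thesis by simp
qed

lemma Nprod_split: "i < k \<Longrightarrow> Nprod k \<alpha> = nden \<alpha> i * (\<Prod>j\<in>{..<k} - {i}. nden \<alpha> j)"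
  unfolding Nprod_def by (simp add: prod.remove)

lemma Nalpha_int: "i < k \<Longrightarrow> of_int (Nprod k \<alpha>) * \<alpha> i
   = of_int (mnum \<alpha> i * (\<Prod>j\<in>{..<k} - {i}. nden \<alpha> j))"
proof -
  assume i: "i < k"
  have n: "(of_int (nden \<alpha> i) :: rat) \<noteq> 0" using nden_pos[of \<alpha> i] by simp
  show ?thesis
    apply (subst Nprod_split[OF i], subst alpha_eq[of \<alpha> i])
    using n by (simp add: field_simps)
qed

lemma Nalpha_div_int:
  assumes "i < k" "j < k" "i \<noteq> j"
  shows "of_int (Nprod k \<alpha>) * \<alpha> j / of_int (nden \<alpha> i) \<in> \<int>"
proof -
  have n: "(of_int (nden \<alpha> i) :: rat) \<noteq> 0" using nden_pos[of \<alpha> i] by simp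
  have "(\<Prod>l\<in>{..<k} - {j}. nden \<alpha> l) = nden \<alpha> i * (\<Prod>l\<in>{..<k} - {j} - {i}. nden \<alpha> l)"
    using assms by (subst prod.remove[of _ i]) auto
  then have "of_int (Nprod k \<alpha>) * \<alpha> j / of_int (nden \<alpha> i)
     = (of_int (mnum \<alpha> j * (\<Prod>l\<in>{..<k} - {j} - {i}. nden \<alpha> l)) :: rat)"
    using Nalpha_int[OF assms(2), of \<alpha>] n by (simp add: field_simps)
  then show ?thesis by (metis Ints_of_int)
qed

lemma alg2: assumes "(A::rat) \<noteq> 0" "A = N*(a+Q-1)" shows "N*a/A*(r+R) - r = N/A*(a*R + (1-Q)*r)"
proof -
  have "N*a*(r+R) - r*A = N*(a*R + (1-Q)*r)" unfolding assms(2) by (simp add: algebra_simps)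
  then show ?thesis using assms(1) by (simp add: field_simps)
qed

lemma alg1: "(n::rat) \<noteq> 0 \<Longrightarrow> N*a/n - N*(a+Q-1)/n = N/n - N*Q/n" by (simp add: field_simps)

context
  fixes k :: nat and \<alpha> :: "nat \<Rightarrow> rat"
  assumes a0: "\<forall>i<k. 0 \<le> \<alpha> i"
    and a1: "\<forall>i<k. (\<Sum>j\<in>{..<k} - {i}. \<alpha> j) \<le> 1"
    and a2: "(\<Sum>i<k. \<alpha> i) > 1"
begin

lemma A_eq: "of_int (Aint k \<alpha>) = of_int (Nprod k \<alpha>) * ((\<Sum>i<k. \<alpha> i) - 1)"
proof -
  have "of_int (Nprod k \<alpha>) * (\<Sum>i<k. \<alpha> i) = (\<Sum>i<k. of_int (Nprod k \<alpha>) * \<alpha> i)"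
    by (simp add: sum_distrib_left)
  also have "\<dots> = (\<Sum>i<k. of_int (mnum \<alpha> i * (\<Prod>j\<in>{..<k} - {i}. nden \<alpha> j)))"
    by (rule sum.cong) (auto simp: Nalpha_int)
  finally have e: "of_int (Nprod k \<alpha>) * ((\<Sum>i<k. \<alpha> i) - 1)
     = (of_int ((\<Sum>i<k. mnum \<alpha> i * (\<Prod>j\<in>{..<k} - {i}. nden \<alpha> j)) - Nprod k \<alpha>) :: rat)"
    by (simp add: algebra_simps)
  show ?thesis unfolding Aint_def e by (simp only: floor_of_int)
qed

lemma A_pos: "Aint k \<alpha> > 0"
proof -
  have "(0::rat) < of_int (Nprod k \<alpha>) * ((\<Sum>i<k. \<alpha> i) - 1)"
    using Nprod_pos[of k \<alpha>] a2 by simp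
  then show ?thesis using A_eq by simp
qed

lemma A_nz: "(of_int (Aint k \<alpha>) :: rat) \<noteq> 0" using A_pos by simp

lemma n_nz: "(of_int (nden \<alpha> i) :: rat) \<noteq> 0" using nden_pos[of \<alpha> i] by simp

lemma ahat: "j < k \<Longrightarrow> alpha_hat k \<alpha> j = 1 - (\<Sum>i<k. \<alpha> i) + \<alpha> j"
  unfolding alpha_hat_def by (simp add: sum_rem)

lemma xvec_eq: "j < k \<Longrightarrow> xvec k \<alpha> i j = of_int (Nprod k \<alpha>) * \<alpha> j / of_int (nden \<alpha> i)
   - (if j = i then of_int (Aint k \<alpha>) / of_int (nden \<alpha> i) else 0)"
  unfolding xvec_def A_eq using n_nz[of i] by (auto simp: ahat field_simps)

lemma bvec_eq: "j < k \<Longrightarrow> bvec k \<alpha> a j = of_int (Nprod k \<alpha>) * \<alpha> j / of_int (Aint k \<alpha>)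
     * (\<Sum>i<k. of_int (a i) / of_int (nden \<alpha> i)) - of_int (a j) / of_int (nden \<alpha> j)"
proof -
  assume j: "j < k"
  have "bnum k \<alpha> a j = of_int (Nprod k \<alpha>) * \<alpha> j * (\<Sum>i<k. of_int (a i) / of_int (nden \<alpha> i))
     - of_int (Aint k \<alpha>) * of_int (a j) / of_int (nden \<alpha> j)"
    unfolding bnum_def A_eq using j n_nz[of j] by (simp add: sum_rem ahat field_simps)
  then show ?thesis unfolding bvec_def using A_nz by (simp add: field_simps)
qed

lemma repr_eq: "j < k \<Longrightarrow> repr k \<alpha> a c j = of_int (Nprod k \<alpha>) * \<alpha> j / of_int (Aint k \<alpha>)
     * (\<Sum>i<k. of_int (a i + Aint k \<alpha> * c i) / of_int (nden \<alpha> i))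
     - of_int (a j + Aint k \<alpha> * c j) / of_int (nden \<alpha> j)"
proof -
  assume j: "j < k"
  have "(\<Sum>i<k. of_int (c i) * xvec k \<alpha> i j) =
     (\<Sum>i<k. of_int (Nprod k \<alpha>) * \<alpha> j * (of_int (c i) / of_int (nden \<alpha> i))
      - (if i = j then of_int (c i) * of_int (Aint k \<alpha>) / of_int (nden \<alpha> i) else 0))"
    by (rule sum.cong) (auto simp: xvec_eq j n_nz field_simps)
  also have "\<dots> = of_int (Nprod k \<alpha>) * \<alpha> j * (\<Sum>i<k. of_int (c i) / of_int (nden \<alpha> i))
      - of_int (c j) * of_int (Aint k \<alpha>) / of_int (nden \<alpha> j)"
    using j n_nz[of j] by (simp add: sum_subtractf sum_distrib_left)
  finally have e: "(\<Sum>i<k. of_int (c i) * xvec k \<alpha> i j) = \<dots>" .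
  have s: "(\<Sum>i<k. of_int (a i + Aint k \<alpha> * c i) / of_int (nden \<alpha> i) :: rat)
     = (\<Sum>i<k. of_int (a i) / of_int (nden \<alpha> i)) + of_int (Aint k \<alpha>) * (\<Sum>i<k. of_int (c i) / of_int (nden \<alpha> i))"
    by (simp add: sum.distrib sum_distrib_left add_divide_distrib)
  show ?thesis unfolding repr_def e bvec_eq[OF j] s using A_nz n_nz[of j]
    by (simp add: field_simps)
qed

lemma x_int: assumes i: "i < k" and j: "j < k" shows "xvec k \<alpha> i j \<in> \<int>"
proof (cases "i = j")
  case False
  then show ?thesis using xvec_eq[OF j, of i] Nalpha_div_int[OF i j False] by simp
next
  case True
  let ?P = "\<Prod>l\<in>{..<k} - {i}. nden \<alpha> l"
  have N: "(of_int (Nprod k \<alpha>) :: rat) = of_int (nden \<alpha> i) * of_int ?P"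
    using Nprod_split[OF i, of \<alpha>] by simp
  let ?Q = "\<Sum>l\<in>{..<k} - {i}. \<alpha> l"
  have A2: "of_int (Aint k \<alpha>) = of_int (Nprod k \<alpha>) * (\<alpha> i + ?Q - 1)"
    using A_eq sum_rem[OF i, of \<alpha>] by simp
  have "xvec k \<alpha> i i = of_int (Nprod k \<alpha>) * \<alpha> i / of_int (nden \<alpha> i)
     - of_int (Nprod k \<alpha>) * (\<alpha> i + ?Q - 1) / of_int (nden \<alpha> i)"
    using xvec_eq[OF i, of i] A2 by simp
  also have "\<dots> = of_int (Nprod k \<alpha>) / of_int (nden \<alpha> i) - of_int (Nprod k \<alpha>) * ?Q / of_int (nden \<alpha> i)"
    by (rule alg1[OF n_nz])
  also have "of_int (Nprod k \<alpha>) / of_int (nden \<alpha> i) = (of_int ?P :: rat)" using N n_nz[of i] by simp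
  also have "of_int (Nprod k \<alpha>) * ?Q / of_int (nden \<alpha> i)
     = (\<Sum>l\<in>{..<k} - {i}. of_int (Nprod k \<alpha>) * \<alpha> l / of_int (nden \<alpha> i))"
    by (simp add: sum_distrib_left sum_divide_distrib)
  finally have "xvec k \<alpha> i j = of_int ?P - (\<Sum>l\<in>{..<k} - {i}. of_int (Nprod k \<alpha>) * \<alpha> l / of_int (nden \<alpha> i))"
    using True by simp
  moreover have "(\<Sum>l\<in>{..<k} - {i}. of_int (Nprod k \<alpha>) * \<alpha> l / of_int (nden \<alpha> i)) \<in> \<int>"
    by (rule Ints_sum) (use i Nalpha_div_int in auto)
  ultimately show ?thesis by (metis Ints_diff Ints_of_int of_int_prod)
qed

lemma sum_main: "(\<Sum>j<k. of_int (Nprod k \<alpha>) * \<alpha> j / of_int (Aint k \<alpha>) * T - of_int (t j) / of_int (nden \<alpha> j))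
   = of_int (Nprod k \<alpha>) / of_int (Aint k \<alpha>) * T + (T - (\<Sum>j<k. of_int (t j) / of_int (nden \<alpha> j)))"
proof -
  have "(\<Sum>j<k. of_int (Nprod k \<alpha>) * \<alpha> j / of_int (Aint k \<alpha>) * T)
     = of_int (Nprod k \<alpha>) * (\<Sum>j<k. \<alpha> j) / of_int (Aint k \<alpha>) * T"
    by (simp add: sum_distrib_right sum_distrib_left sum_divide_distrib)
  also have "\<dots> = (of_int (Aint k \<alpha>) + of_int (Nprod k \<alpha>)) / of_int (Aint k \<alpha>) * T"
  proof -
    have NS: "of_int (Nprod k \<alpha>) * (\<Sum>j<k. \<alpha> j) = of_int (Aint k \<alpha>) + of_int (Nprod k \<alpha>)"
      using A_eq by (simp add: algebra_simps)
    show ?thesis by (simp only: NS)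
  qed
  also have "\<dots> = of_int (Nprod k \<alpha>) / of_int (Aint k \<alpha>) * T + T"
    using A_nz by (simp add: field_simps)
  finally show ?thesis by (simp add: sum_subtractf)
qed

lemma nonneg_main:
  assumes j: "j < k" and t: "\<forall>i<k. 0 \<le> t i"
  shows "0 \<le> of_int (Nprod k \<alpha>) * \<alpha> j / of_int (Aint k \<alpha>) * (\<Sum>i<k. of_int (t i) / of_int (nden \<alpha> i))
      - of_int (t j) / of_int (nden \<alpha> j)"
proof -
  let ?R = "\<Sum>i\<in>{..<k} - {j}. of_int (t i) / of_int (nden \<alpha> i) :: rat"
  let ?Q = "\<Sum>l\<in>{..<k} - {j}. \<alpha> l"
  have e: "of_int (Nprod k \<alpha>) * \<alpha> j / of_int (Aint k \<alpha>) * (\<Sum>i<k. of_int (t i) / of_int (nden \<alpha> i))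
      - of_int (t j) / of_int (nden \<alpha> j)
     = of_int (Nprod k \<alpha>) / of_int (Aint k \<alpha>) * (\<alpha> j * ?R + (1 - ?Q) * (of_int (t j) / of_int (nden \<alpha> j)))"
  proof -
    have A2: "of_int (Aint k \<alpha>) = of_int (Nprod k \<alpha>) * (\<alpha> j + ?Q - 1)"
      using A_eq sum_rem[OF j, of \<alpha>] by simp
    have T: "(\<Sum>i<k. of_int (t i) / of_int (nden \<alpha> i)) = of_int (t j) / of_int (nden \<alpha> j) + ?R"
      using sum_rem[OF j, of "\<lambda>i. of_int (t i) / of_int (nden \<alpha> i)"] by simp
    show ?thesis unfolding T by (rule alg2[OF A_nz A2])
  qed
  have "0 \<le> ?R" by (intro sum_nonneg divide_nonneg_pos) (use t nden_pos[of \<alpha>] in auto)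
  moreover have "0 \<le> 1 - ?Q" using a1 j by auto
  moreover have "0 \<le> of_int (t j) / (of_int (nden \<alpha> j) :: rat)" using t j nden_pos[of \<alpha> j] by auto
  moreover have "0 \<le> (of_int (Nprod k \<alpha>) :: rat) / of_int (Aint k \<alpha>)"
    using A_pos Nprod_pos[of k \<alpha>] by auto
  moreover have "0 \<le> \<alpha> j" using a0 j by auto
  ultimately show ?thesis unfolding e by (intro mult_nonneg_nonneg add_nonneg_nonneg) auto
qed


lemma t_div: "i < k \<Longrightarrow> of_int (mnum \<alpha> i * s - nden \<alpha> i * g) / of_int (nden \<alpha> i) = \<alpha> i * of_int s - (of_int g :: rat)"
  using n_nz[of i] by (simp add: alpha_eq[of \<alpha> i] field_simps)

lemma NA_alpha: "of_int (Nprod k \<alpha>) * x / of_int (Aint k \<alpha>) * ((\<Sum>i<k. \<alpha> i) * y - y) = x * (y :: rat)"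
proof -
  have "of_int (Nprod k \<alpha>) * x / of_int (Aint k \<alpha>) * ((\<Sum>i<k. \<alpha> i) * y - y)
     = x * y * (of_int (Nprod k \<alpha>) * ((\<Sum>i<k. \<alpha> i) - 1)) / of_int (Aint k \<alpha>)"
    by (simp add: algebra_simps)
  also have "\<dots> = x * y" unfolding A_eq[symmetric] using A_nz by simp
  finally show ?thesis .
qed

lemma key_g:
  assumes j: "j < k" and at: "\<forall>i<k. a i + Aint k \<alpha> * c i = mnum \<alpha> i * (\<Sum>l<k. g l) - nden \<alpha> i * g i"
  shows "repr k \<alpha> a c j = of_int (g j)"
proof -
  let ?s = "\<Sum>l<k. g l"
  have "(\<Sum>i<k. of_int (a i + Aint k \<alpha> * c i) / of_int (nden \<alpha> i))
      = (\<Sum>i<k. \<alpha> i * of_int ?s - (of_int (g i) :: rat))"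
  proof (rule sum.cong)
    fix i assume "i \<in> {..<k}"
    then have i: "i < k" by simp
    show "of_int (a i + Aint k \<alpha> * c i) / of_int (nden \<alpha> i) = \<alpha> i * of_int ?s - (of_int (g i) :: rat)"
      by (simp only: at[rule_format, OF i] t_div[OF i])
  qed simp
  also have "\<dots> = (\<Sum>i<k. \<alpha> i) * of_int ?s - of_int ?s"
    by (simp add: sum_subtractf sum_distrib_right)
  finally have T: "(\<Sum>i<k. of_int (a i + Aint k \<alpha> * c i) / of_int (nden \<alpha> i)) = \<dots>" .
  show ?thesis unfolding repr_eq[OF j] T NA_alpha by (simp only: at[rule_format, OF j] t_div[OF j])
qed

lemma b_int: "inA k \<alpha> a \<Longrightarrow> j < k \<Longrightarrow> bvec k \<alpha> a j \<in> \<int>"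
  unfolding inA_def bvec_def using A_nz by auto

lemma repr_int: "inA k \<alpha> a \<Longrightarrow> j < k \<Longrightarrow> repr k \<alpha> a c j \<in> \<int>"
  unfolding repr_def using b_int x_int by (intro Ints_add Ints_sum Ints_mult) auto

lemma sum_repr: "(\<Sum>j<k. repr k \<alpha> a c j) = of_int (Nprod k \<alpha>) / of_int (Aint k \<alpha>)
     * (\<Sum>i<k. of_int (a i + Aint k \<alpha> * c i) / of_int (nden \<alpha> i))"
proof -
  have "(\<Sum>j<k. repr k \<alpha> a c j) = (\<Sum>j<k. of_int (Nprod k \<alpha>) * \<alpha> j / of_int (Aint k \<alpha>)
     * (\<Sum>i<k. of_int (a i + Aint k \<alpha> * c i) / of_int (nden \<alpha> i))
     - of_int (a j + Aint k \<alpha> * c j) / of_int (nden \<alpha> j))"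
    by (rule sum.cong) (simp_all add: repr_eq)
  then show ?thesis unfolding sum_main by simp
qed

lemma part3: "(\<Sum>j<k. bvec k \<alpha> a j) =
   of_int (Nprod k \<alpha>) / of_int (Aint k \<alpha>) * (\<Sum>i<k. of_int (a i) / of_int (nden \<alpha> i))"
proof -
  have "(\<Sum>j<k. bvec k \<alpha> a j) = (\<Sum>j<k. of_int (Nprod k \<alpha>) * \<alpha> j / of_int (Aint k \<alpha>)
     * (\<Sum>i<k. of_int (a i) / of_int (nden \<alpha> i)) - of_int (a j) / of_int (nden \<alpha> j))"
    by (rule sum.cong) (simp_all add: bvec_eq)
  then show ?thesis unfolding sum_main by simp
qed

lemma part2:
  assumes a: "inA k \<alpha> a" and c: "\<forall>i<k. 0 \<le> c i"
  shows "\<exists>g. communal k \<alpha> g \<and> (\<forall>j<k. of_int (g j) = repr k \<alpha> a c j)"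
proof -
  define g where "g = (\<lambda>j. \<lfloor>repr k \<alpha> a c j\<rfloor>)"
  have gr: "\<forall>j<k. of_int (g j) = repr k \<alpha> a c j"
    using repr_int[OF a] unfolding g_def by (metis Ints_cases floor_of_int)
  let ?t = "\<lambda>i. a i + Aint k \<alpha> * c i"
  let ?T = "\<Sum>i<k. of_int (?t i) / of_int (nden \<alpha> i) :: rat"
  have t: "\<forall>i<k. 0 \<le> ?t i" using a c A_pos unfolding inA_def by auto
  have sg: "of_int (\<Sum>j<k. g j) = of_int (Nprod k \<alpha>) / of_int (Aint k \<alpha>) * ?T"
  proof -
    have "of_int (\<Sum>j<k. g j) = (\<Sum>j<k. repr k \<alpha> a c j)"
      unfolding of_int_sum by (rule sum.cong) (use gr in auto)
    then show ?thesis unfolding sum_repr .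
  qed
  have "communal k \<alpha> g"
    unfolding communal_def
  proof (intro allI impI conjI)
    fix i assume i: "i < k"
    have "(0::rat) \<le> of_int (g i)" using gr i nonneg_main[OF i t] repr_eq[OF i] by simp
    then show "0 \<le> g i" by simp
    have t0: "0 \<le> (of_int (?t i) :: rat)" by (simp only: of_int_0_le_iff) (use t i in auto)
    have "0 \<le> of_int (?t i) / (of_int (nden \<alpha> i) :: rat)"
      by (rule divide_nonneg_pos[OF t0]) (simp add: nden_pos)
    moreover have "of_int (g i) = of_int (Nprod k \<alpha>) * \<alpha> i / of_int (Aint k \<alpha>) * ?T
       - of_int (?t i) / of_int (nden \<alpha> i)" using gr i repr_eq[OF i] by metis
    moreover have "of_int (Nprod k \<alpha>) * \<alpha> i / of_int (Aint k \<alpha>) * ?T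
       = \<alpha> i * (of_int (Nprod k \<alpha>) / of_int (Aint k \<alpha>) * ?T)" by (simp add: field_simps)
    ultimately show "of_int (g i) \<le> \<alpha> i * of_int (\<Sum>j<k. g j)"
      unfolding sg by linarith
  qed
  then show ?thesis using gr by blast
qed


lemma part1:
  assumes g: "communal k \<alpha> g"
  defines "s \<equiv> \<Sum>j<k. g j"
  defines "a \<equiv> \<lambda>j. (mnum \<alpha> j * s - nden \<alpha> j * g j) mod Aint k \<alpha>"
  defines "c \<equiv> \<lambda>j. (mnum \<alpha> j * s - nden \<alpha> j * g j - a j) div Aint k \<alpha>"
  shows "inA k \<alpha> a \<and> (\<forall>i<k. 0 \<le> c i) \<and> (\<forall>j<k. of_int (g j) = repr k \<alpha> a c j) \<and>
     (\<forall>a' c'. inA k \<alpha> a' \<and> (\<forall>i<k. 0 \<le> c' i) \<and> (\<forall>j<k. of_int (g j) = repr k \<alpha> a' c' j) \<longrightarrow>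
        (\<forall>i<k. a' i = a i \<and> c' i = c i))"
proof -
  define t where "t = (\<lambda>j. mnum \<alpha> j * s - nden \<alpha> j * g j)"
  have Apos: "Aint k \<alpha> > 0" by (rule A_pos)
  have tnn: "0 \<le> t j" if j: "j < k" for j
  proof -
    have le: "of_int (g j) \<le> of_int (mnum \<alpha> j) / of_int (nden \<alpha> j) * (of_int s :: rat)"
    proof -
      have "of_int (g j) \<le> \<alpha> j * (of_int s :: rat)" using g j unfolding communal_def s_def by auto
      then show ?thesis by (simp only: alpha_eq[of \<alpha> j, symmetric])
    qed
    have "of_int (nden \<alpha> j) * of_int (g j) \<le> of_int (nden \<alpha> j) * (of_int (mnum \<alpha> j) / of_int (nden \<alpha> j) * (of_int s :: rat))"
      by (rule mult_left_mono[OF le]) (simp add: less_imp_le nden_pos)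
    also have "\<dots> = of_int (mnum \<alpha> j) * of_int s" using n_nz[of j] by simp
    finally have "(of_int (nden \<alpha> j * g j) :: rat) \<le> of_int (mnum \<alpha> j * s)" by simp
    then show ?thesis unfolding t_def by linarith
  qed
  have ad: "a j = t j mod Aint k \<alpha>" for j unfolding a_def t_def by simp
  have cd: "c j = t j div Aint k \<alpha>" for j
  proof -
    have "c j = (t j - t j mod Aint k \<alpha>) div Aint k \<alpha>" unfolding c_def a_def t_def by simp
    also have "\<dots> = (Aint k \<alpha> * (t j div Aint k \<alpha>)) div Aint k \<alpha>" by (simp only: minus_mod_eq_mult_div)
    also have "\<dots> = t j div Aint k \<alpha>" using Apos by simp
    finally show ?thesis .
  qed
  have at: "\<forall>i<k. a i + Aint k \<alpha> * c i = mnum \<alpha> i * (\<Sum>l<k. g l) - nden \<alpha> i * g i"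
    unfolding ad cd s_def[symmetric] t_def[symmetric] by (simp add: mod_mult_div_eq t_def)
  have rep: "\<forall>j<k. of_int (g j) = repr k \<alpha> a c j" using key_g[OF _ at] by simp
  have cnn: "\<forall>i<k. 0 \<le> c i" unfolding cd using tnn Apos by (simp add: pos_imp_zdiv_nonneg_iff)
  have inA: "inA k \<alpha> a"
    unfolding inA_def
  proof (intro conjI allI impI)
    fix i assume "i < k"
    show "0 \<le> a i" "a i < Aint k \<alpha>" unfolding ad using Apos by simp_all
  next
    fix j assume j: "j < k"
    have "bvec k \<alpha> a j = of_int (g j) - (\<Sum>i<k. of_int (c i) * xvec k \<alpha> i j)"
      using rep j unfolding repr_def by simp
    also have "\<dots> \<in> \<int>" using x_int j by (intro Ints_diff Ints_sum Ints_mult) auto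
    finally obtain z where z: "bvec k \<alpha> a j = of_int z" by (auto elim: Ints_cases)
    have "bnum k \<alpha> a j = of_int (Aint k \<alpha>) * bvec k \<alpha> a j" unfolding bvec_def using A_nz by simp
    then show "\<exists>z. bnum k \<alpha> a j = of_int (Aint k \<alpha>) * of_int z" using z by auto
  qed
  have uniq: "a' i = a i \<and> c' i = c i"
    if a': "inA k \<alpha> a'" and c': "\<forall>i<k. 0 \<le> c' i" and r': "\<forall>j<k. of_int (g j) = repr k \<alpha> a' c' j"
      and i: "i < k" for a' c' i
  proof -
    let ?t = "\<lambda>i. a' i + Aint k \<alpha> * c' i"
    let ?T = "\<Sum>i<k. of_int (?t i) / of_int (nden \<alpha> i) :: rat"
    have "of_int s = (\<Sum>j<k. repr k \<alpha> a' c' j)"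
      unfolding s_def of_int_sum by (rule sum.cong) (use r' in auto)
    then have sT: "of_int s = of_int (Nprod k \<alpha>) / of_int (Aint k \<alpha>) * ?T" unfolding sum_repr .
    have "of_int (g i) = of_int (Nprod k \<alpha>) * \<alpha> i / of_int (Aint k \<alpha>) * ?T
       - of_int (?t i) / of_int (nden \<alpha> i)" using r' i repr_eq[OF i] by metis
    moreover have "of_int (Nprod k \<alpha>) * \<alpha> i / of_int (Aint k \<alpha>) * ?T
       = \<alpha> i * (of_int (Nprod k \<alpha>) / of_int (Aint k \<alpha>) * ?T)" by (simp add: field_simps)
    ultimately have "of_int (?t i) / of_int (nden \<alpha> i) = \<alpha> i * of_int s - (of_int (g i) :: rat)"
      unfolding sT by linarith
    also have "\<dots> = of_int (t i) / of_int (nden \<alpha> i)" unfolding t_def using t_div[OF i] by simp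
    finally have "(of_int (?t i) :: rat) = of_int (t i)" using n_nz[of i] by simp
    then have tt: "?t i = t i" by (simp only: of_int_eq_iff)
    have b: "0 \<le> a' i" "a' i < Aint k \<alpha>" using a' i unfolding inA_def by auto
    have "a i = a' i" unfolding ad tt[symmetric] using b by simp
    moreover have "c i = c' i" unfolding cd tt[symmetric] using b Apos by simp
    ultimately show ?thesis by simp
  qed
  show ?thesis using inA cnn rep uniq by blast
qed

end

theorem mainTheorem7:
  fixes k :: nat and \<alpha> :: "nat \<Rightarrow> rat"
  assumes "k \<ge> 2"
    and "\<forall>i<k. 0 \<le> \<alpha> i"
    and "\<forall>i<k. (\<Sum>j\<in>{..<k} - {i}. \<alpha> j) \<le> 1"
    and "(\<Sum>i<k. \<alpha> i) > 1"
  shows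
    "(\<forall>g. communal k \<alpha> g \<longrightarrow>
        (let s = (\<Sum>j<k. g j);
             a = (\<lambda>j. (mnum \<alpha> j * s - nden \<alpha> j * g j) mod Aint k \<alpha>);
             c = (\<lambda>j. (mnum \<alpha> j * s - nden \<alpha> j * g j - a j) div Aint k \<alpha>)
         in inA k \<alpha> a \<and> (\<forall>i<k. 0 \<le> c i) \<and>
            (\<forall>j<k. of_int (g j) = repr k \<alpha> a c j) \<and>
            (\<forall>a' c'. inA k \<alpha> a' \<and> (\<forall>i<k. 0 \<le> c' i) \<and>
                 (\<forall>j<k. of_int (g j) = repr k \<alpha> a' c' j) \<longrightarrow>
                 (\<forall>i<k. a' i = a i \<and> c' i = c i))))
     \<and> (\<forall>a c. inA k \<alpha> a \<and> (\<forall>i<k. 0 \<le> c i) \<longrightarrow>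
          (\<exists>g. communal k \<alpha> g \<and> (\<forall>j<k. of_int (g j) = repr k \<alpha> a c j)))
     \<and> (\<forall>a. inA k \<alpha> a \<longrightarrow>
          (\<Sum>j<k. bvec k \<alpha> a j) =
            of_int (Nprod k \<alpha>) / of_int (Aint k \<alpha>) * (\<Sum>i<k. of_int (a i) / of_int (nden \<alpha> i)))"
proof -
  note h = assms(2) assms(3) assms(4)
  show ?thesis
    unfolding Let_def
    using part1[OF h] part2[OF h] part3[OF h] by blast
qed

end
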